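(* Let $T=(V,E)$ be a finite rooted binary tree with root $\rho$, $\Pr$ a probability distribution over a finite set of queries, and $k$ a positive integer. Consider the dynamic-programming algorithm described in the context, which fills the table $D(u,\kappa,v)$ bottom-up and then calls $\mathrm{ConstructSolution}(\rho,k,\epsilon)$. Then the set of nodes printed by this call is an optimal solution $R^*$, i.e., it maximizes the benefit $B(R)$ over all sets $R$ of non-leaf nodes of $T$ with $|R|\le k$, and $D(\rho,k,\epsilon)$ equals this optimal benefit.
   Context: Setting. $T=(V,E)$ is a finite rooted tree in which every non-leaf node $u$ has exactly two children, a left child $\ell(u)$ and a right child $r(u)$. $T(u)$ is the set of nodes of the subtree rooted at $u$ (including $u$), $A(u)$ the set of proper ancestors of $u$, and for $v\in A(u)$, $\mathrm{path}(u,v)$ the nodes strictly between $u$ and $v$. Each non-leaf node is associated with a variable of a finite set $X$; $\mathrm{vars}(u)$ is the set of variables associated with nodes of $T(u)$. Each query $q$ determines $Z_q\subseteq X$. For $R\subseteq V$, $w\in V$: $I_q(w,R)=1$ iff $w\in R$, $\mathrm{vars}(w)\subseteq Z_q$, and no $x\in A(w)\cap R$ has $\mathrm{vars}(x)\subseteq Z_q$; else $0$; $\mathbb{E}[I(w,R)]=\sum_q\Pr(q)I_q(w,R)$. Nodes have partial costs $c(x)\ge 0$; total cost $C(w)=\sum_{x\in T(w)}c(x)$. Benefit $B(R)=\sum_{w\in R}\mathbb{E}[I(w,R)]C(w)$; partial benefit $B_u(R)=\sum_{w\in R\cap T(u)}\mathbb{E}[I(w,R)]C(w)$. $\epsilon$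 is an auxiliary symbol not in $V$, $A^\epsilon(u)=A(u)\cup\{\epsilon\}$, $\mathrm{path}(u,\epsilon)=A(u)$; $\epsilon$ is regarded as belonging to every set but not counted in its size and contributing nothing, so $B_u(S\cup\{\epsilon\})=B_u(S)$. In particular $B_u(\{u,v\})=\mathbb{E}[I(u,\{u,v\})]C(u)$ and $B_u(\{u,\epsilon\})=\mathbb{E}[I(u,\{u\})]C(u)$. Algorithm. For $u\in V$, $v\in A^\epsilon(u)$ and integers $0\le\kappa\le\min\{k,|T(u)|\}$, $D(u,\kappa,v)$ is intended to be the maximum of $B_u(R)$ over sets $R$ with $|T(u)\cap R|\le\kappa$, $v\in R$, $\mathrm{path}(u,v)\cap R=\emptyset$. It is computed bottom-up as $D(u,\kappa,v)=\max\{D^{+}(u,\kappa,v),D^{-}(u,\kappa,v)\}$ where: if $u$ is a leaf, $D^{-}(u,\kappa,v)=0$ and $D^{+}(u,\kappa,v)=-\infty$ (leaves are never selected); if $u$ is not a leaf, $D^{+}(u,\kappa,v)=B_u(\{u,v\})+\max_{\kappa_\ell+\kappa_r=\kappa-1}\{D(\ell(u),\kappa_\ell,u)+D(r(u),\kappa_r,u)\}$ (and $-\infty$ if $\kappa=0$), $D^{-}(u,\kappa,v)=\max_{\kappa_\ell+\kappa_r=\kappa}\{D(\ell(u),\kappa_\ell,v)+D(r(u),\kappa_r,v)\}$, the maxima ranging over nonnegative $\kappa_\ell,\kappa_r$ for which the entries are defined. $\mathrm{ConstructSolution}(u,\kappa,v)$: if $D(u,\kappa,v)=D^{+}(u,\kappa,v)$,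 print $u$; if $\kappa=1$ return; otherwise take $(\kappa_\ell^*,\kappa_r^* )$ maximizing $D(\ell(u),\kappa_\ell,u)+D(r(u),\kappa_r,u)$ subject to $\kappa_\ell+\kappa_r=\kappa-1$ and call $\mathrm{ConstructSolution}(\ell(u),\kappa_\ell^*,u)$ and $\mathrm{ConstructSolution}(r(u),\kappa_r^*,u)$. Else take $(\kappa_\ell^*,\kappa_r^* )$ maximizing $D(\ell(u),\kappa_\ell,v)+D(r(u),\kappa_r,v)$ subject to $\kappa_\ell+\kappa_r=\kappa$ and call $\mathrm{ConstructSolution}(\ell(u),\kappa_\ell^*,v)$ and $\mathrm{ConstructSolution}(r(u),\kappa_r^*,v)$. *)

theory Defs
  imports Main "HOL-Library.Extended_Real" "HOL-Library.Sublist"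
begin

text \<open>Full binary trees; every inner node carries a variable.  Nodes of a tree are
  identified by their positions (paths from the root; False = left, True = right).\<close>

datatype 'x btree = Leaf | Node 'x "'x btree" "'x btree"

type_synonym pos = "bool list"

fun positions :: "'x btree \<Rightarrow> pos set" where
  "positions Leaf = {[]}"
| "positions (Node x l r) = insert [] (Cons False ` positions l \<union> Cons True ` positions r)"

fun subtree :: "'x btree \<Rightarrow> pos \<Rightarrow> 'x btree" where
  "subtree t [] = t"
| "subtree (Node x l r) (False # p) = subtree l p"
| "subtree (Node x l r) (True # p) = subtree r p"
| "subtree Leaf (b # p) = Leaf"

fun tvars :: "'x btree \<Rightarrow> 'x set" where
  "tvars Leaf = {}"
| "tvars (Node x l r) = insert x (tvars l \<union> tvars r)"

fun nnodes :: "'x btree \<Rightarrow> nat" where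
  "nnodes Leaf = 1"
| "nnodes (Node x l r) = 1 + nnodes l + nnodes r"

definition inner :: "'x btree \<Rightarrow> pos set" where
  "inner t = {u \<in> positions t. subtree t u \<noteq> Leaf}"

definition Tset :: "'x btree \<Rightarrow> pos \<Rightarrow> pos set" where
  "Tset t u = {w \<in> positions t. prefix u w}"

definition anc :: "pos \<Rightarrow> pos set" where
  "anc u = {a. strict_prefix a u}"

definition vars :: "'x btree \<Rightarrow> pos \<Rightarrow> 'x set" where
  "vars t u = tvars (subtree t u)"

definition Ind :: "'x btree \<Rightarrow> ('q \<Rightarrow> 'x set) \<Rightarrow> 'q \<Rightarrow> pos \<Rightarrow> pos set \<Rightarrow> bool" where
  "Ind t Z q w R \<longleftrightarrow> w \<in> R \<and> vars t w \<subseteq> Z q \<and> \<not> (\<exists>x \<in> anc w \<inter> R. vars t x \<subseteq> Z q)"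

definition EI :: "'q set \<Rightarrow> ('q \<Rightarrow> real) \<Rightarrow> 'x btree \<Rightarrow> ('q \<Rightarrow> 'x set) \<Rightarrow> pos \<Rightarrow> pos set \<Rightarrow> real" where
  "EI Q pr t Z w R = (\<Sum>q\<in>Q. pr q * (if Ind t Z q w R then 1 else 0))"

definition Ctot :: "'x btree \<Rightarrow> (pos \<Rightarrow> real) \<Rightarrow> pos \<Rightarrow> real" where
  "Ctot t c w = (\<Sum>x\<in>Tset t w. c x)"

definition Ben :: "'q set \<Rightarrow> ('q \<Rightarrow> real) \<Rightarrow> 'x btree \<Rightarrow> ('q \<Rightarrow> 'x set) \<Rightarrow> (pos \<Rightarrow> real) \<Rightarrow> pos set \<Rightarrow> real" where
  "Ben Q pr t Z c R = (\<Sum>w\<in>R. EI Q pr t Z w R * Ctot t c w)"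

text \<open>B_u({u,v}) where v = None stands for \<epsilon>\<close>
definition Bu :: "'q set \<Rightarrow> ('q \<Rightarrow> real) \<Rightarrow> 'x btree \<Rightarrow> ('q \<Rightarrow> 'x set) \<Rightarrow> (pos \<Rightarrow> real) \<Rightarrow> pos \<Rightarrow> pos option \<Rightarrow> real" where
  "Bu Q pr t Z c u v = (case v of None \<Rightarrow> EI Q pr t Z u {u} | Some a \<Rightarrow> EI Q pr t Z u {u, a}) * Ctot t c u"

definition splits :: "nat \<Rightarrow> nat \<Rightarrow> nat \<Rightarrow> (nat \<times> nat) set" where
  "splits n kl kr = {(a, b). a + b = n \<and> a \<le> kl \<and> b \<le> kr}"

definition splitmax :: "nat \<Rightarrow> nat \<Rightarrow> nat \<Rightarrow> (nat \<Rightarrow> ereal) \<Rightarrow> (nat \<Rightarrow> ereal) \<Rightarrow> ereal" where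
  "splitmax n kl kr f g = (SUP p \<in> splits n kl kr. f (fst p) + g (snd p))"

text \<open>The table D(u,\<kappa>,v).  The first tree argument is the full tree T, the second one
  the subtree rooted at the position u (the recursion runs over it).\<close>
fun Dtab :: "'q set \<Rightarrow> ('q \<Rightarrow> real) \<Rightarrow> ('q \<Rightarrow> 'x set) \<Rightarrow> (pos \<Rightarrow> real) \<Rightarrow> nat \<Rightarrow> 'x btree
    \<Rightarrow> 'x btree \<Rightarrow> pos \<Rightarrow> nat \<Rightarrow> pos option \<Rightarrow> ereal" where
  "Dtab Q pr Z c k t Leaf u \<kappa> v = max (-\<infinity>) 0"
| "Dtab Q pr Z c k t (Node x l r) u \<kappa> v =
     max (if \<kappa> = 0 then -\<infinity> else
            ereal (Bu Q pr t Z c u v) +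
            splitmax (\<kappa> - 1) (min k (nnodes l)) (min k (nnodes r))
              (\<lambda>a. Dtab Q pr Z c k t l (u @ [False]) a (Some u))
              (\<lambda>b. Dtab Q pr Z c k t r (u @ [True]) b (Some u)))
         (splitmax \<kappa> (min k (nnodes l)) (min k (nnodes r))
              (\<lambda>a. Dtab Q pr Z c k t l (u @ [False]) a v)
              (\<lambda>b. Dtab Q pr Z c k t r (u @ [True]) b v))"

fun Dplus :: "'q set \<Rightarrow> ('q \<Rightarrow> real) \<Rightarrow> ('q \<Rightarrow> 'x set) \<Rightarrow> (pos \<Rightarrow> real) \<Rightarrow> nat \<Rightarrow> 'x btree
    \<Rightarrow> 'x btree \<Rightarrow> pos \<Rightarrow> nat \<Rightarrow> pos option \<Rightarrow> ereal" where
  "Dplus Q pr Z c k t Leaf u \<kappa> v = -\<infinity>"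
| "Dplus Q pr Z c k t (Node x l r) u \<kappa> v =
     (if \<kappa> = 0 then -\<infinity> else
            ereal (Bu Q pr t Z c u v) +
            splitmax (\<kappa> - 1) (min k (nnodes l)) (min k (nnodes r))
              (\<lambda>a. Dtab Q pr Z c k t l (u @ [False]) a (Some u))
              (\<lambda>b. Dtab Q pr Z c k t r (u @ [True]) b (Some u)))"

text \<open>ConstructSolution(u,\<kappa>,v) as a relation between its arguments and the set of
  printed nodes; it allows every admissible choice of maximizing split (any tie-breaking).\<close>
inductive construct :: "'q set \<Rightarrow> ('q \<Rightarrow> real) \<Rightarrow> ('q \<Rightarrow> 'x set) \<Rightarrow> (pos \<Rightarrow> real) \<Rightarrow> nat \<Rightarrow> 'x btree
    \<Rightarrow> 'x btree \<Rightarrow> pos \<Rightarrow> nat \<Rightarrow> pos option \<Rightarrow> pos set \<Rightarrow> bool"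
  for Q pr Z c k t where
  leaf: "construct Q pr Z c k t Leaf u \<kappa> v {}"
| plus_one: "Dtab Q pr Z c k t (Node x l r) u 1 v = Dplus Q pr Z c k t (Node x l r) u 1 v
     \<Longrightarrow> construct Q pr Z c k t (Node x l r) u 1 v {u}"
| plus: "\<lbrakk> Dtab Q pr Z c k t (Node x l r) u \<kappa> v = Dplus Q pr Z c k t (Node x l r) u \<kappa> v;
      \<kappa> > 1;
      (a, b) \<in> splits (\<kappa> - 1) (min k (nnodes l)) (min k (nnodes r));
      \<forall>(a', b') \<in> splits (\<kappa> - 1) (min k (nnodes l)) (min k (nnodes r)).
          Dtab Q pr Z c k t l (u @ [False]) a' (Some u) + Dtab Q pr Z c k t r (u @ [True]) b' (Some u)
          \<le> Dtab Q pr Z c k t l (u @ [False]) a (Some u) + Dtab Q pr Z c k t r (u @ [True]) b (Some u);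
      construct Q pr Z c k t l (u @ [False]) a (Some u) S1;
      construct Q pr Z c k t r (u @ [True]) b (Some u) S2 \<rbrakk>
     \<Longrightarrow> construct Q pr Z c k t (Node x l r) u \<kappa> v (insert u (S1 \<union> S2))"
| minus: "\<lbrakk> Dtab Q pr Z c k t (Node x l r) u \<kappa> v \<noteq> Dplus Q pr Z c k t (Node x l r) u \<kappa> v;
      (a, b) \<in> splits \<kappa> (min k (nnodes l)) (min k (nnodes r));
      \<forall>(a', b') \<in> splits \<kappa> (min k (nnodes l)) (min k (nnodes r)).
          Dtab Q pr Z c k t l (u @ [False]) a' v + Dtab Q pr Z c k t r (u @ [True]) b' v
          \<le> Dtab Q pr Z c k t l (u @ [False]) a v + Dtab Q pr Z c k t r (u @ [True]) b v;
      construct Q pr Z c k t l (u @ [False]) a v S1;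
      construct Q pr Z c k t r (u @ [True]) b v S2 \<rbrakk>
     \<Longrightarrow> construct Q pr Z c k t (Node x l r) u \<kappa> v (S1 \<union> S2)"

end

theory Submission
  imports Defs
begin

lemma subtree_Leaf[simp]: "subtree Leaf p = Leaf"
  by (cases p) simp_all

lemma subtree_append: "subtree t (u @ p) = subtree (subtree t u) p"
proof (induction u arbitrary: t)
  case Nil then show ?case by simp
next
  case (Cons b u) then show ?case
    by (cases t; cases b) auto
qed

lemma nonleaf_pos: "subtree t u \<noteq> Leaf \<Longrightarrow> u \<in> positions t"
proof (induction u arbitrary: t)
  case Nil then show ?case by (cases t) auto
next
  case (Cons b u) then show ?case
    by (cases t; cases b) auto
qed

lemma finite_positions: "finite (positions t)"
  by (induction t) auto

lemma finite_Tset: "finite (Tset t u)"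
  unfolding Tset_def by (rule finite_subset[OF _ finite_positions]) auto

lemma Tset_split: "Tset t u \<subseteq> insert u (Tset t (u@[False]) \<union> Tset t (u@[True]))"
proof
  fix w assume "w \<in> Tset t u"
  then have w: "w \<in> positions t" "prefix u w" by (auto simp: Tset_def)
  then obtain p where p: "w = u @ p" by (auto simp: prefix_def)
  show "w \<in> insert u (Tset t (u@[False]) \<union> Tset t (u@[True]))"
  proof (cases p)
    case Nil then show ?thesis using p by simp
  next
    case (Cons b p') then show ?thesis using p w by (cases b) (auto simp: Tset_def)
  qed
qed

lemma Tset_child_sub: "Tset t (u@[b]) \<subseteq> Tset t u"
  by (auto simp: Tset_def prefix_def)

lemma u_notin_child: "u \<notin> Tset t (u@[b])"
  by (auto simp: Tset_def prefix_def)

lemma children_disj: "Tset t (u@[False]) \<inter> Tset t (u@[True]) = {}"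
proof -
  { fix w assume "prefix (u@[False]) w" "prefix (u@[True]) w"
    then have False by (auto simp: prefix_def) }
  then show ?thesis by (auto simp: Tset_def)
qed

lemma tvars_subtree: "tvars (subtree s p) \<subseteq> tvars s"
  by (induction s p rule: subtree.induct) auto

lemma vars_mono: "prefix a w \<Longrightarrow> vars t w \<subseteq> vars t a"
  by (auto simp: vars_def prefix_def subtree_append dest: subsetD[OF tvars_subtree])

lemma card_inner_Tset: "subtree t u = s \<Longrightarrow> card (inner t \<inter> Tset t u) < nnodes s"
proof (induction s arbitrary: u)
  case Leaf
  have "inner t \<inter> Tset t u = {}"
    using Leaf by (auto simp: inner_def Tset_def prefix_def subtree_append)
  then show ?case by simp
next
  case (Node x l r)
  have l: "subtree t (u@[False]) = l" and r: "subtree t (u@[True]) = r"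
    using Node.prems by (auto simp: subtree_append)
  have "inner t \<inter> Tset t u \<subseteq> insert u (inner t \<inter> Tset t (u@[False]) \<union> inner t \<inter> Tset t (u@[True]))"
    using Tset_split by blast
  then have "card (inner t \<inter> Tset t u) \<le> card (insert u (inner t \<inter> Tset t (u@[False]) \<union> inner t \<inter> Tset t (u@[True])))"
    by (intro card_mono) (auto simp: finite_Tset)
  also have "\<dots> \<le> Suc (card (inner t \<inter> Tset t (u@[False]) \<union> inner t \<inter> Tset t (u@[True])))"
    by (rule card_insert_le_m1) auto
  also have "\<dots> \<le> Suc (card (inner t \<inter> Tset t (u@[False])) + card (inner t \<inter> Tset t (u@[True])))"
    using card_Un_le by auto
  finally show ?case using Node.IH(1)[OF l] Node.IH(2)[OF r] by simp
qed

lemma anc_child: "R \<subseteq> Tset t u \<Longrightarrow> w \<in> Tset t (u@[b]) \<Longrightarrow> anc w \<inter> R \<subseteq> insert u (Tset t (u@[b]))"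
proof
  fix x assume R: "R \<subseteq> Tset t u" and w: "w \<in> Tset t (u@[b])" and x: "x \<in> anc w \<inter> R"
  then have "prefix u x" "x \<in> positions t" "strict_prefix x w" "prefix (u@[b]) w"
    by (auto simp: Tset_def anc_def)
  then obtain y z where y: "x = u @ y" and z: "w = u @ [b] @ z" by (auto simp: prefix_def)
  show "x \<in> insert u (Tset t (u@[b]))"
  proof (cases y)
    case Nil then show ?thesis using y by simp
  next
    case (Cons b' y')
    from \<open>strict_prefix x w\<close> have "prefix x w" by auto
    then have "b' = b" using y z Cons by (auto simp: prefix_def)
    then show ?thesis using y Cons \<open>x \<in> positions t\<close> by (auto simp: Tset_def)
  qed
qed


lemma EI_cong: "(\<And>q. q \<in> Q \<Longrightarrow> Ind t Z q w S \<longleftrightarrow> Ind t Z q w S') \<Longrightarrow> EI Q pr t Z w S = EI Q pr t Z w S'"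
  unfolding EI_def by (rule sum.cong) auto

definition vok :: "pos option \<Rightarrow> pos \<Rightarrow> bool" where
  "vok v u \<longleftrightarrow> (\<forall>a. v = Some a \<longrightarrow> strict_prefix a u)"

locale setting =
  fixes Q :: "'q set" and pr :: "'q \<Rightarrow> real" and Z :: "'q \<Rightarrow> 'x set"
    and c :: "pos \<Rightarrow> real" and k :: nat and t :: "'x btree"
  assumes finQ: "finite Q" and prnn: "\<forall>q\<in>Q. pr q \<ge> 0" and cnn: "\<forall>x\<in>positions t. c x \<ge> 0"
begin

definition LB :: "pos option \<Rightarrow> pos set \<Rightarrow> real" where
  "LB v R = (\<Sum>w\<in>R. EI Q pr t Z w (R \<union> set_option v) * Ctot t c w)"

definition F :: "'q \<Rightarrow> pos option \<Rightarrow> pos set \<Rightarrow> real" where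
  "F q v R = (\<Sum>w\<in>R. if Ind t Z q w (R \<union> set_option v) then Ctot t c w else 0)"

lemma Ctot_nn: "Ctot t c w \<ge> 0"
  unfolding Ctot_def using cnn by (intro sum_nonneg) (auto simp: Tset_def)

lemma F_nn: "F q v R \<ge> 0"
  unfolding F_def using Ctot_nn by (intro sum_nonneg) auto

lemma LB_F: "LB v R = (\<Sum>q\<in>Q. pr q * F q v R)"
proof -
  have "LB v R = (\<Sum>w\<in>R. \<Sum>q\<in>Q. pr q * (if Ind t Z q w (R \<union> set_option v) then Ctot t c w else 0))"
    unfolding LB_def EI_def sum_distrib_right by (intro sum.cong refl) auto
  also have "\<dots> = (\<Sum>q\<in>Q. \<Sum>w\<in>R. pr q * (if Ind t Z q w (R \<union> set_option v) then Ctot t c w else 0))"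
    by (rule sum.swap)
  also have "\<dots> = (\<Sum>q\<in>Q. pr q * F q v R)"
    unfolding F_def by (simp add: sum_distrib_left)
  finally show ?thesis .
qed

lemma LB_empty[simp]: "LB v {} = 0"
  by (simp add: LB_def)

lemma LB_minus:
  assumes R: "R \<subseteq> Tset t u" and u: "u \<notin> R"
  shows "LB v R = LB v (R \<inter> Tset t (u@[False])) + LB v (R \<inter> Tset t (u@[True]))"
proof -
  let ?L = "Tset t (u@[False])" and ?T = "Tset t (u@[True])"
  have fin: "finite R" using R finite_Tset finite_subset by blast
  have split: "R = (R \<inter> ?L) \<union> (R \<inter> ?T)" using R u Tset_split by blast
  have disj: "(R \<inter> ?L) \<inter> (R \<inter> ?T) = {}" using children_disj by blast
  have eq: "EI Q pr t Z w (R \<union> set_option v) = EI Q pr t Z w ((R \<inter> Tset t (u@[b])) \<union> set_option v)"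
    if w: "w \<in> R \<inter> Tset t (u@[b])" for w b
  proof (rule EI_cong)
    fix q
    have "anc w \<inter> R \<subseteq> Tset t (u@[b])" using anc_child[OF R, of w b] w u by blast
    then have "anc w \<inter> (R \<union> set_option v) = anc w \<inter> ((R \<inter> Tset t (u@[b])) \<union> set_option v)" by blast
    then show "Ind t Z q w (R \<union> set_option v) \<longleftrightarrow> Ind t Z q w ((R \<inter> Tset t (u@[b])) \<union> set_option v)"
      using w unfolding Ind_def by auto
  qed
  have "LB v R = (\<Sum>w\<in>R \<inter> ?L. EI Q pr t Z w (R \<union> set_option v) * Ctot t c w)
      + (\<Sum>w\<in>R \<inter> ?T. EI Q pr t Z w (R \<union> set_option v) * Ctot t c w)"
    unfolding LB_def by (subst split, rule sum.union_disjoint) (use fin disj in auto)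
  also have "\<dots> = LB v (R \<inter> ?L) + LB v (R \<inter> ?T)"
    unfolding LB_def using eq[of _ False] eq[of _ True] by simp
  finally show ?thesis .
qed

lemma LB_plus:
  assumes R: "R \<subseteq> Tset t u" and u: "u \<in> R" and v: "vok v u"
  shows "LB v R = Bu Q pr t Z c u v + LB (Some u) (R \<inter> Tset t (u@[False])) + LB (Some u) (R \<inter> Tset t (u@[True]))"
proof -
  let ?L = "Tset t (u@[False])" and ?T = "Tset t (u@[True])"
  have fin: "finite R" using R finite_Tset finite_subset by blast
  have split: "R = insert u ((R \<inter> ?L) \<union> (R \<inter> ?T))" using R u Tset_split by blast
  have disj: "(R \<inter> ?L) \<inter> (R \<inter> ?T) = {}" using children_disj by blast
  have unot: "u \<notin> (R \<inter> ?L) \<union> (R \<inter> ?T)" using u_notin_child by blast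
  have eq: "EI Q pr t Z w (R \<union> set_option v) = EI Q pr t Z w ((R \<inter> Tset t (u@[b])) \<union> set_option (Some u))"
    if w: "w \<in> R \<inter> Tset t (u@[b])" for w b
  proof (rule EI_cong)
    fix q
    have sub: "anc w \<inter> R \<subseteq> insert u (Tset t (u@[b]))" using anc_child[OF R, of w b] w by blast
    have uw: "u \<in> anc w" using w u_notin_child[of u t b]
      by (auto simp: Tset_def anc_def prefix_def strict_prefix_def)
    have "(\<exists>x\<in>anc w \<inter> (R \<union> set_option v). vars t x \<subseteq> Z q) \<longleftrightarrow>
          (\<exists>x\<in>anc w \<inter> ((R \<inter> Tset t (u@[b])) \<union> {u}). vars t x \<subseteq> Z q)"
    proof
      assume "\<exists>x\<in>anc w \<inter> (R \<union> set_option v). vars t x \<subseteq> Z q"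
      then obtain x where x: "x \<in> anc w" "x \<in> R \<union> set_option v" "vars t x \<subseteq> Z q" by blast
      show "\<exists>x\<in>anc w \<inter> ((R \<inter> Tset t (u@[b])) \<union> {u}). vars t x \<subseteq> Z q"
      proof (cases "x \<in> R")
        case True then show ?thesis using x sub by blast
      next
        case False
        then have "v = Some x" using x by (cases v) auto
        then have "strict_prefix x u" using v by (auto simp: vok_def)
        then have "prefix x u" by (rule prefix_order.less_imp_le)
        then have "vars t u \<subseteq> Z q" using vars_mono[of x u t] x(3) by blast
        then show ?thesis using uw by blast
      qed
    next
      assume "\<exists>x\<in>anc w \<inter> ((R \<inter> Tset t (u@[b])) \<union> {u}). vars t x \<subseteq> Z q"
      then show "\<exists>x\<in>anc w \<inter> (R \<union> set_option v). vars t x \<subseteq> Z q" using u by blast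
    qed
    then show "Ind t Z q w (R \<union> set_option v) \<longleftrightarrow> Ind t Z q w ((R \<inter> Tset t (u@[b])) \<union> set_option (Some u))"
      using w unfolding Ind_def by auto
  qed
  have equ: "EI Q pr t Z u (R \<union> set_option v) = EI Q pr t Z u (insert u (set_option v))"
  proof (rule EI_cong)
    fix q
    have "anc u \<inter> R = {}" using R by (auto simp: Tset_def anc_def strict_prefix_def dest: prefix_order.antisym)
    then have "anc u \<inter> (R \<union> set_option v) = anc u \<inter> (insert u (set_option v))"
      by (auto simp: anc_def)
    then show "Ind t Z q u (R \<union> set_option v) \<longleftrightarrow> Ind t Z q u (insert u (set_option v))"
      using u unfolding Ind_def by auto
  qed
  have bu: "Bu Q pr t Z c u v = EI Q pr t Z u (insert u (set_option v)) * Ctot t c u"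
    unfolding Bu_def by (cases v) auto
  have "LB v R = EI Q pr t Z u (R \<union> set_option v) * Ctot t c u
      + ((\<Sum>w\<in>R \<inter> ?L. EI Q pr t Z w (R \<union> set_option v) * Ctot t c w)
      + (\<Sum>w\<in>R \<inter> ?T. EI Q pr t Z w (R \<union> set_option v) * Ctot t c w))"
  proof -
    define f where "f w = EI Q pr t Z w (R \<union> set_option v) * Ctot t c w" for w
    have A: "R - {u} = (R \<inter> ?L) \<union> (R \<inter> ?T)" using split unot by blast
    have "(\<Sum>w\<in>R. f w) = f u + (\<Sum>w\<in>R-{u}. f w)" using fin u by (simp add: sum.remove)
    also have "\<dots> = f u + ((\<Sum>w\<in>R \<inter> ?L. f w) + (\<Sum>w\<in>R \<inter> ?T. f w))"
      unfolding A by (subst sum.union_disjoint) (use fin disj in auto)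
    finally show ?thesis unfolding LB_def f_def .
  qed
  also have "\<dots> = Bu Q pr t Z c u v + LB (Some u) (R \<inter> ?L) + LB (Some u) (R \<inter> ?T)"
    unfolding LB_def bu equ using eq[of _ False] eq[of _ True] by simp
  finally show ?thesis .
qed


lemma F_antichain:
  assumes R: "R \<subseteq> Tset t u"
  shows "F q v R \<le> Ctot t c u"
proof -
  let ?S = "R \<union> set_option v"
  define A where "A = {w \<in> R. Ind t Z q w ?S}"
  have fin: "finite R" using R finite_Tset finite_subset by blast
  have finA: "finite A" using fin A_def by simp
  have "F q v R = (\<Sum>w\<in>A. Ctot t c w)"
    unfolding F_def A_def using fin by (simp add: sum.inter_filter)
  also have "\<dots> = (\<Sum>w\<in>A. \<Sum>x\<in>Tset t w. c x)" unfolding Ctot_def ..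
  also have "\<dots> = (\<Sum>x\<in>(\<Union>w\<in>A. Tset t w). c x)"
  proof (rule sum.UNION_disjoint[symmetric])
    show "finite A" by (rule finA)
    show "\<forall>w\<in>A. finite (Tset t w)" using finite_Tset by blast
    show "\<forall>w1\<in>A. \<forall>w2\<in>A. w1 \<noteq> w2 \<longrightarrow> Tset t w1 \<inter> Tset t w2 = {}"
    proof (intro ballI impI)
      fix w1 w2 assume w1: "w1 \<in> A" and w2: "w2 \<in> A" and ne: "w1 \<noteq> w2"
      have nopre: False if "a \<in> A" "b \<in> A" "a \<noteq> b" "prefix a b" for a b
      proof -
        have "a \<in> anc b" using that by (auto simp: anc_def strict_prefix_def)
        moreover have "a \<in> ?S" "vars t a \<subseteq> Z q" "Ind t Z q b ?S" using that by (auto simp: A_def Ind_def)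
        ultimately show False unfolding Ind_def by blast
      qed
      show "Tset t w1 \<inter> Tset t w2 = {}"
      proof (rule ccontr)
        assume "Tset t w1 \<inter> Tset t w2 \<noteq> {}"
        then obtain x where "prefix w1 x" "prefix w2 x" by (auto simp: Tset_def)
        then have "prefix w1 w2 \<or> prefix w2 w1" by (rule prefix_same_cases)
        then show False using nopre w1 w2 ne by metis
      qed
    qed
  qed
  also have "\<dots> \<le> (\<Sum>x\<in>Tset t u. c x)"
  proof (rule sum_mono2[OF finite_Tset])
    show "(\<Union>w\<in>A. Tset t w) \<subseteq> Tset t u"
      using R unfolding A_def Tset_def by (auto intro: prefix_order.order_trans)
    show "0 \<le> c b" if "b \<in> Tset t u - (\<Union>w\<in>A. Tset t w)" for b using cnn that by (auto simp: Tset_def)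
  qed
  finally show ?thesis by (simp add: Ctot_def)
qed

lemma F_mono:
  assumes R: "R \<subseteq> Tset t u" and u: "u \<notin> R" and v: "vok v u"
  shows "F q v R \<le> F q v (insert u R)"
proof -
  let ?S = "R \<union> set_option v" and ?S' = "insert u R \<union> set_option v"
  have fin: "finite R" using R finite_Tset finite_subset by blast
  have Fi: "F q v (insert u R) = (if Ind t Z q u ?S' then Ctot t c u else 0)
      + (\<Sum>w\<in>R. if Ind t Z q w ?S' then Ctot t c w else 0)"
    unfolding F_def using fin u by simp
  have uw: "u \<in> anc w" if "w \<in> R" for w
    using that R u by (auto simp: Tset_def anc_def strict_prefix_def)
  have ancu: "anc u \<inter> R = {}" using R by (auto simp: Tset_def anc_def strict_prefix_def dest: prefix_order.antisym)
  show ?thesis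
  proof (cases "vars t u \<subseteq> Z q")
    case False
    have "Ind t Z q w ?S' \<longleftrightarrow> Ind t Z q w ?S" if "w \<in> R" for w
      using that False u unfolding Ind_def by auto
    moreover have "\<not> Ind t Z q u ?S'" using False unfolding Ind_def by auto
    ultimately have "(\<Sum>w\<in>R. if Ind t Z q w ?S' then Ctot t c w else 0) = F q v R"
      unfolding F_def by (intro sum.cong) auto
    with \<open>\<not> Ind t Z q u ?S'\<close> show ?thesis unfolding Fi by simp
  next
    case True
    show ?thesis
    proof (cases "\<exists>a. v = Some a \<and> vars t a \<subseteq> Z q")
      case True
      then obtain a where a: "v = Some a" "vars t a \<subseteq> Z q" by blast
      have "a \<in> anc w" if "w \<in> R" for w
        using uw[OF that] a v by (auto simp: vok_def anc_def intro: prefix_order.less_trans)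
      then have "\<not> Ind t Z q w ?S" if "w \<in> R" for w using that a unfolding Ind_def by auto
      then have "F q v R = 0" unfolding F_def by simp
      then show ?thesis using F_nn by simp
    next
      case False
      have "Ind t Z q u ?S'"
        unfolding Ind_def using True False ancu by (cases v) (auto simp: anc_def)
      then have "F q v (insert u R) \<ge> Ctot t c u"
        unfolding Fi using Ctot_nn by (auto intro!: sum_nonneg)
      then show ?thesis using F_antichain[OF R, of q v] by simp
    qed
  qed
qed

lemma LB_mono:
  assumes R: "R \<subseteq> Tset t u" and u: "u \<notin> R" and v: "vok v u"
  shows "LB v R \<le> LB v (insert u R)"
  unfolding LB_F using F_mono[OF assms] prnn by (intro sum_mono mult_left_mono) auto


end

lemma finite_splits: "finite (splits n kl kr)"
  by (rule finite_subset[of _ "{..kl} \<times> {..kr}"]) (auto simp: splits_def)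

lemma splits_zero: "splits 0 kl kr = {(0,0)}"
  by (auto simp: splits_def)

lemma splitmax_upper: "(a, b) \<in> splits n kl kr \<Longrightarrow> f a + g b \<le> splitmax n kl kr f g"
  unfolding splitmax_def using SUP_upper[of "(a,b)" "splits n kl kr" "\<lambda>p. f (fst p) + g (snd p)"] by simp

lemma splitmax_attained:
  assumes "(a, b) \<in> splits n kl kr"
    and "\<forall>(a', b') \<in> splits n kl kr. f a' + g b' \<le> f a + g b"
  shows "splitmax n kl kr f g = f a + g b"
  unfolding splitmax_def
  by (rule antisym) (use assms in \<open>auto intro!: SUP_least SUP_upper2[of "(a,b)"]\<close>)

lemma splitmax_empty: "splits n kl kr = {} \<Longrightarrow> splitmax n kl kr f g = -\<infinity>"
  unfolding splitmax_def by (simp add: bot_ereal_def)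

lemma splits_argmax:
  assumes "splits n kl kr \<noteq> {}"
  shows "\<exists>a b. (a, b) \<in> splits n kl kr \<and> (\<forall>(a', b') \<in> splits n kl kr. f a' + g b' \<le> f a + (g b :: ereal))"
proof -
  let ?h = "\<lambda>p. f (fst p) + g (snd p)"
  have fin: "finite (?h ` splits n kl kr)" using finite_splits by simp
  have "Max (?h ` splits n kl kr) \<in> ?h ` splits n kl kr" using fin assms by (intro Max_in) auto
  then obtain p where p: "p \<in> splits n kl kr" "?h p = Max (?h ` splits n kl kr)" by auto
  have "\<forall>(a', b') \<in> splits n kl kr. f a' + g b' \<le> ?h p"
    using p(2) Max_ge[OF fin] by fastforce
  then show ?thesis using p(1) by (intro exI[of _ "fst p"] exI[of _ "snd p"]) auto
qed

lemma splits_choose: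
  assumes "cL \<le> kl" "cR \<le> kr" "cL + cR \<le> n" "n \<le> kl + kr"
  shows "\<exists>a b. (a, b) \<in> splits n kl kr \<and> cL \<le> a \<and> cR \<le> b"
  using assms by (intro exI[of _ "max cL (n - kr)"] exI[of _ "n - max cL (n - kr)"]) (auto simp: splits_def)

lemma min_arith: "(\<kappa>::nat) \<le> k \<Longrightarrow> \<kappa> \<le> Suc (a + b) \<Longrightarrow> \<kappa> - Suc 0 \<le> min k a + min k b"
  by (auto simp: min_def)

lemma Dtab_Node: "Dtab Q pr Z c k t (Node x l r) u \<kappa> v = max (Dplus Q pr Z c k t (Node x l r) u \<kappa> v)
   (splitmax \<kappa> (min k (nnodes l)) (min k (nnodes r))
              (\<lambda>a. Dtab Q pr Z c k t l (u @ [False]) a v)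
              (\<lambda>b. Dtab Q pr Z c k t r (u @ [True]) b v))"
  by simp

lemma Dtab_zero: "Dtab Q pr Z c k t s u 0 v = 0"
  by (induction s arbitrary: u v) (simp_all add: splitmax_def splits_zero)

lemma construct_exists:
  "\<kappa> \<le> min k (nnodes s) \<Longrightarrow> \<exists>S. construct Q pr Z c k t s u \<kappa> v S"
proof (induction s arbitrary: u \<kappa> v)
  case Leaf then show ?case by (auto intro: construct.leaf)
next
  case (Node x l r)
  show ?case
  proof (cases "Dtab Q pr Z c k t (Node x l r) u \<kappa> v = Dplus Q pr Z c k t (Node x l r) u \<kappa> v")
    case True
    note eqD = True
    have "\<kappa> \<noteq> 0"
    proof
      assume k0: "\<kappa> = 0"
      then have "Dtab Q pr Z c k t (Node x l r) u \<kappa> v = 0" by (simp only: Dtab_zero)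
      moreover have "Dplus Q pr Z c k t (Node x l r) u \<kappa> v = -\<infinity>" using k0 by simp
      ultimately show False using True by simp
    qed
    show ?thesis
    proof (cases "\<kappa> = 1")
      case True
      show ?thesis unfolding True using construct.plus_one[OF eqD[unfolded True]] by blast
    next
      case False
      have "splits (\<kappa> - 1) (min k (nnodes l)) (min k (nnodes r)) \<noteq> {}"
        using splits_choose[of 0 "min k (nnodes l)" 0 "min k (nnodes r)" "\<kappa> - 1"] Node.prems min_arith[of \<kappa> k "nnodes l" "nnodes r"] by auto
      from splits_argmax[OF this, of "\<lambda>a. Dtab Q pr Z c k t l (u @ [False]) a (Some u)"
          "\<lambda>b. Dtab Q pr Z c k t r (u @ [True]) b (Some u)"]
      obtain a b where ab: "(a, b) \<in> splits (\<kappa> - 1) (min k (nnodes l)) (min k (nnodes r))"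
        "\<forall>(a', b') \<in> splits (\<kappa> - 1) (min k (nnodes l)) (min k (nnodes r)).
          Dtab Q pr Z c k t l (u @ [False]) a' (Some u) + Dtab Q pr Z c k t r (u @ [True]) b' (Some u)
          \<le> Dtab Q pr Z c k t l (u @ [False]) a (Some u) + Dtab Q pr Z c k t r (u @ [True]) b (Some u)"
        by blast
      obtain S1 where S1: "construct Q pr Z c k t l (u @ [False]) a (Some u) S1"
        using Node.IH(1)[of a] ab(1) by (auto simp: splits_def)
      obtain S2 where S2: "construct Q pr Z c k t r (u @ [True]) b (Some u) S2"
        using Node.IH(2)[of b] ab(1) by (auto simp: splits_def)
      show ?thesis using construct.plus[OF True _ ab S1 S2] False \<open>\<kappa> \<noteq> 0\<close> by auto
    qed
  next
    case False
    have "splits \<kappa> (min k (nnodes l)) (min k (nnodes r)) \<noteq> {}"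
    proof
      assume "splits \<kappa> (min k (nnodes l)) (min k (nnodes r)) = {}"
      then have "Dtab Q pr Z c k t (Node x l r) u \<kappa> v = Dplus Q pr Z c k t (Node x l r) u \<kappa> v"
        unfolding Dtab_Node by (simp add: splitmax_empty)
      with False show False by simp
    qed
    from splits_argmax[OF this, of "\<lambda>a. Dtab Q pr Z c k t l (u @ [False]) a v"
          "\<lambda>b. Dtab Q pr Z c k t r (u @ [True]) b v"]
    obtain a b where ab: "(a, b) \<in> splits \<kappa> (min k (nnodes l)) (min k (nnodes r))"
        "\<forall>(a', b') \<in> splits \<kappa> (min k (nnodes l)) (min k (nnodes r)).
          Dtab Q pr Z c k t l (u @ [False]) a' v + Dtab Q pr Z c k t r (u @ [True]) b' v
          \<le> Dtab Q pr Z c k t l (u @ [False]) a v + Dtab Q pr Z c k t r (u @ [True]) b v"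
      by blast
    obtain S1 where S1: "construct Q pr Z c k t l (u @ [False]) a v S1"
      using Node.IH(1)[of a] ab(1) by (auto simp: splits_def)
    obtain S2 where S2: "construct Q pr Z c k t r (u @ [True]) b v S2"
      using Node.IH(2)[of b] ab(1) by (auto simp: splits_def)
    show ?thesis using construct.minus[OF False ab S1 S2] by auto
  qed
qed


context setting
begin

lemma child_sub: "subtree t u = Node x l r \<Longrightarrow> subtree t (u@[False]) = l \<and> subtree t (u@[True]) = r"
  by (simp add: subtree_append)

lemma vok_child: "vok v u \<Longrightarrow> vok v (u@[b])"
  by (auto simp: vok_def intro: prefix_order.less_le_trans)

lemma vok_self: "vok (Some u) (u@[b])"
  by (auto simp: vok_def strict_prefix_def prefix_def)

lemma u_inner: "subtree t u = Node x l r \<Longrightarrow> u \<in> inner t \<inter> Tset t u"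
  using nonleaf_pos[of t u] by (auto simp: inner_def Tset_def)

lemma construct_sound:
  "construct Q pr Z c k t s u \<kappa> v S \<Longrightarrow> subtree t u = s \<Longrightarrow> vok v u \<Longrightarrow>
   S \<subseteq> inner t \<inter> Tset t u \<and> card S \<le> \<kappa> \<and> Dtab Q pr Z c k t s u \<kappa> v = ereal (LB v S)"
proof (induction rule: construct.induct)
  case (leaf u \<kappa> v)
  then show ?case by simp
next
  case (plus_one x l r u v)
  have uin: "u \<in> inner t \<inter> Tset t u" using u_inner[OF plus_one(2)] .
  have "LB v {u} = Bu Q pr t Z c u v + LB (Some u) ({u} \<inter> Tset t (u@[False])) + LB (Some u) ({u} \<inter> Tset t (u@[True]))"
    using uin plus_one(3) by (intro LB_plus) auto
  also have "\<dots> = Bu Q pr t Z c u v" using u_notin_child[of u t] by simp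
  finally have lb: "LB v {u} = Bu Q pr t Z c u v" .
  have "Dtab Q pr Z c k t (Node x l r) u 1 v = Dplus Q pr Z c k t (Node x l r) u 1 v" by (rule plus_one(1))
  also have "\<dots> = ereal (Bu Q pr t Z c u v)"
    by (simp add: splitmax_def splits_zero Dtab_zero)
  finally show ?case using uin lb by simp
next
  case (plus x l r u \<kappa> v a b S1 S2)
  note ch = child_sub[OF plus.prems(1)]
  have IH1: "S1 \<subseteq> inner t \<inter> Tset t (u@[False]) \<and> card S1 \<le> a \<and> Dtab Q pr Z c k t l (u @ [False]) a (Some u) = ereal (LB (Some u) S1)"
    using plus.IH(1) ch vok_self by blast
  have IH2: "S2 \<subseteq> inner t \<inter> Tset t (u@[True]) \<and> card S2 \<le> b \<and> Dtab Q pr Z c k t r (u @ [True]) b (Some u) = ereal (LB (Some u) S2)"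
    using plus.IH(2) ch vok_self by blast
  have uin: "u \<in> inner t \<inter> Tset t u" using u_inner[OF plus.prems(1)] .
  let ?S = "insert u (S1 \<union> S2)"
  have sub: "?S \<subseteq> inner t \<inter> Tset t u" using IH1 IH2 uin Tset_child_sub by blast
  have fin1: "finite S1" "finite S2" using IH1 IH2 finite_Tset finite_subset by blast+
  have "card ?S \<le> Suc (card (S1 \<union> S2))" by (rule card_insert_le_m1) auto
  also have "\<dots> \<le> Suc (card S1 + card S2)" using card_Un_le by simp
  also have "\<dots> \<le> \<kappa>" using IH1 IH2 plus.hyps(2,3) by (auto simp: splits_def)
  finally have card: "card ?S \<le> \<kappa>" .
  have i1: "?S \<inter> Tset t (u@[False]) = S1" using IH1 IH2 children_disj u_notin_child[of u t False] by blast
  have i2: "?S \<inter> Tset t (u@[True]) = S2" using IH1 IH2 children_disj u_notin_child[of u t True] by blast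
  have lb: "LB v ?S = Bu Q pr t Z c u v + LB (Some u) S1 + LB (Some u) S2"
    using LB_plus[of ?S u v] sub plus.prems(2) i1 i2 by auto
  have "Dtab Q pr Z c k t (Node x l r) u \<kappa> v = Dplus Q pr Z c k t (Node x l r) u \<kappa> v" by (rule plus.hyps(1))
  also have "\<dots> = ereal (Bu Q pr t Z c u v) + (Dtab Q pr Z c k t l (u @ [False]) a (Some u) + Dtab Q pr Z c k t r (u @ [True]) b (Some u))"
    using plus.hyps(2) splitmax_attained[OF plus.hyps(3,4)] by simp
  also have "\<dots> = ereal (LB v ?S)" using IH1 IH2 lb by simp
  finally show ?case using sub card by simp
next
  case (minus x l r u \<kappa> v a b S1 S2)
  note ch = child_sub[OF minus.prems(1)]
  have IH1: "S1 \<subseteq> inner t \<inter> Tset t (u@[False]) \<and> card S1 \<le> a \<and> Dtab Q pr Z c k t l (u @ [False]) a v = ereal (LB v S1)"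
    using minus.IH(1) ch vok_child minus.prems(2) by blast
  have IH2: "S2 \<subseteq> inner t \<inter> Tset t (u@[True]) \<and> card S2 \<le> b \<and> Dtab Q pr Z c k t r (u @ [True]) b v = ereal (LB v S2)"
    using minus.IH(2) ch vok_child minus.prems(2) by blast
  let ?S = "S1 \<union> S2"
  have sub: "?S \<subseteq> inner t \<inter> Tset t u" using IH1 IH2 Tset_child_sub by blast
  have unot: "u \<notin> ?S" using IH1 IH2 u_notin_child by blast
  have "card ?S \<le> card S1 + card S2" by (rule card_Un_le)
  also have "\<dots> \<le> \<kappa>" using IH1 IH2 minus.hyps(2) by (auto simp: splits_def)
  finally have card: "card ?S \<le> \<kappa>" .
  have i1: "?S \<inter> Tset t (u@[False]) = S1" using IH1 IH2 children_disj by blast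
  have i2: "?S \<inter> Tset t (u@[True]) = S2" using IH1 IH2 children_disj by blast
  have lb: "LB v ?S = LB v S1 + LB v S2"
    using LB_minus[of ?S u v] sub unot i1 i2 by auto
  have "Dtab Q pr Z c k t (Node x l r) u \<kappa> v = splitmax \<kappa> (min k (nnodes l)) (min k (nnodes r))
              (\<lambda>a. Dtab Q pr Z c k t l (u @ [False]) a v)
              (\<lambda>b. Dtab Q pr Z c k t r (u @ [True]) b v)"
    using minus.hyps(1) unfolding Dtab_Node by (auto simp: max_def split: if_splits)
  also have "\<dots> = Dtab Q pr Z c k t l (u @ [False]) a v + Dtab Q pr Z c k t r (u @ [True]) b v"
    using splitmax_attained[OF minus.hyps(2,3)] by simp
  also have "\<dots> = ereal (LB v ?S)" using IH1 IH2 lb by simp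
  finally show ?case using sub card by simp
qed


lemma upper:
  "subtree t u = s \<Longrightarrow> R \<subseteq> inner t \<inter> Tset t u \<Longrightarrow> card R \<le> \<kappa> \<Longrightarrow> \<kappa> \<le> min k (nnodes s) \<Longrightarrow> vok v u
   \<Longrightarrow> ereal (LB v R) \<le> Dtab Q pr Z c k t s u \<kappa> v"
proof (induction s arbitrary: u R \<kappa> v)
  case Leaf
  have "card (inner t \<inter> Tset t u) = 0" using card_inner_Tset[OF Leaf.prems(1)] by simp
  moreover have "finite (inner t \<inter> Tset t u)" using finite_Tset[of t u] by simp
  ultimately have "inner t \<inter> Tset t u = {}" by simp
  then have "R = {}" using Leaf.prems(2) by blast
  then show ?case by simp
next
  case (Node x l r)
  note ch = child_sub[OF Node.prems(1)]
  let ?L = "Tset t (u@[False])" and ?T = "Tset t (u@[True])"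
  let ?D = "Dtab Q pr Z c k t (Node x l r) u \<kappa> v"
  have cardL: "card (R' \<inter> ?L) < nnodes l" if "R' \<subseteq> inner t \<inter> Tset t u" for R'
  proof -
    have "card (R' \<inter> ?L) \<le> card (inner t \<inter> ?L)" using that finite_Tset by (intro card_mono) auto
    then show ?thesis using card_inner_Tset[OF conjunct1[OF ch]] by simp
  qed
  have cardT: "card (R' \<inter> ?T) < nnodes r" if "R' \<subseteq> inner t \<inter> Tset t u" for R'
  proof -
    have "card (R' \<inter> ?T) \<le> card (inner t \<inter> ?T)" using that finite_Tset by (intro card_mono) auto
    then show ?thesis using card_inner_Tset[OF conjunct2[OF ch]] by simp
  qed
  have finR: "finite R'" if "R' \<subseteq> inner t \<inter> Tset t u" for R'
    using that finite_Tset finite_subset by blast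
  have cardLe: "card (R' \<inter> ?L) \<le> card R'" "card (R' \<inter> ?T) \<le> card R'" if "R' \<subseteq> inner t \<inter> Tset t u" for R'
    using finR[OF that] by (auto intro: card_mono)
  have subL: "R' \<inter> ?L \<subseteq> inner t \<inter> ?L" "R' \<inter> ?T \<subseteq> inner t \<inter> ?T" if "R' \<subseteq> inner t \<inter> Tset t u" for R'
    using that by auto
  have plus_case: "ereal (LB v R') \<le> ?D"
    if R': "R' \<subseteq> inner t \<inter> Tset t u" "u \<in> R'" "card R' \<le> \<kappa>" for R'
  proof -
    have split: "R' = insert u ((R' \<inter> ?L) \<union> (R' \<inter> ?T))" using R' Tset_split by blast
    have unot: "u \<notin> (R' \<inter> ?L) \<union> (R' \<inter> ?T)" using u_notin_child by blast
    have "card R' = Suc (card ((R' \<inter> ?L) \<union> (R' \<inter> ?T)))"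
      using finR[OF R'(1)] unot by (subst split) (simp add: card_insert_disjoint)
    also have "\<dots> = Suc (card (R' \<inter> ?L) + card (R' \<inter> ?T))"
      using finR[OF R'(1)] children_disj by (subst card_Un_disjoint) auto
    finally have cR': "card R' = Suc (card (R' \<inter> ?L) + card (R' \<inter> ?T))" .
    have k0: "\<kappa> \<noteq> 0" using cR' R'(3) by simp
      have h1: "card (R' \<inter> ?L) \<le> min k (nnodes l)"
      using cardL[OF R'(1)] cardLe(1)[OF R'(1)] R'(3) Node.prems(4) by simp
    have h2: "card (R' \<inter> ?T) \<le> min k (nnodes r)"
      using cardT[OF R'(1)] cardLe(2)[OF R'(1)] R'(3) Node.prems(4) by simp
    have h3: "card (R' \<inter> ?L) + card (R' \<inter> ?T) \<le> \<kappa> - 1" using cR' R'(3) by simp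
    have h4: "\<kappa> - 1 \<le> min k (nnodes l) + min k (nnodes r)"
      using min_arith[of \<kappa> k "nnodes l" "nnodes r"] Node.prems(4) by simp
    obtain a b where ab: "(a, b) \<in> splits (\<kappa> - 1) (min k (nnodes l)) (min k (nnodes r))"
      "card (R' \<inter> ?L) \<le> a" "card (R' \<inter> ?T) \<le> b"
      using splits_choose[OF h1 h2 h3 h4] by blast
    have ab': "a \<le> min k (nnodes l)" "b \<le> min k (nnodes r)" using ab(1) by (auto simp: splits_def)
    have I1: "ereal (LB (Some u) (R' \<inter> ?L)) \<le> Dtab Q pr Z c k t l (u @ [False]) a (Some u)"
      using Node.IH(1)[OF conjunct1[OF ch] subL(1)[OF R'(1)] ab(2) ab'(1) vok_self] .
    have I2: "ereal (LB (Some u) (R' \<inter> ?T)) \<le> Dtab Q pr Z c k t r (u @ [True]) b (Some u)"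
      using Node.IH(2)[OF conjunct2[OF ch] subL(2)[OF R'(1)] ab(3) ab'(2) vok_self] .
    have "ereal (LB v R') = ereal (Bu Q pr t Z c u v) + (ereal (LB (Some u) (R' \<inter> ?L)) + ereal (LB (Some u) (R' \<inter> ?T)))"
      using LB_plus[of R' u v] R' Node.prems(5) by auto
    also have "\<dots> \<le> ereal (Bu Q pr t Z c u v) + (Dtab Q pr Z c k t l (u @ [False]) a (Some u) + Dtab Q pr Z c k t r (u @ [True]) b (Some u))"
      using I1 I2 by (intro add_left_mono add_mono)
    also have "\<dots> \<le> ereal (Bu Q pr t Z c u v) + splitmax (\<kappa> - 1) (min k (nnodes l)) (min k (nnodes r))
              (\<lambda>a. Dtab Q pr Z c k t l (u @ [False]) a (Some u))
              (\<lambda>b. Dtab Q pr Z c k t r (u @ [True]) b (Some u))"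
      using splitmax_upper[OF ab(1)] by (intro add_left_mono)
    also have "\<dots> = Dplus Q pr Z c k t (Node x l r) u \<kappa> v" using k0 by simp
    also have "\<dots> \<le> ?D" unfolding Dtab_Node by simp
    finally show ?thesis .
  qed
  show ?case
  proof (cases "u \<in> R")
    case True then show ?thesis using plus_case Node.prems by blast
  next
    case False
    have split: "R = (R \<inter> ?L) \<union> (R \<inter> ?T)" using Node.prems(2) False Tset_split by blast
    have cR: "card R = card (R \<inter> ?L) + card (R \<inter> ?T)"
      using finR[OF Node.prems(2)] children_disj by (subst split) (subst card_Un_disjoint, auto)
    show ?thesis
    proof (cases "\<kappa> \<le> min k (nnodes l) + min k (nnodes r)")
      case True
      have h1: "card (R \<inter> ?L) \<le> min k (nnodes l)"
        using cardL[OF Node.prems(2)] cardLe(1)[OF Node.prems(2)] Node.prems(3,4) by simp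
      have h2: "card (R \<inter> ?T) \<le> min k (nnodes r)"
        using cardT[OF Node.prems(2)] cardLe(2)[OF Node.prems(2)] Node.prems(3,4) by simp
      have h3: "card (R \<inter> ?L) + card (R \<inter> ?T) \<le> \<kappa>" using cR Node.prems(3) by simp
      obtain a b where ab: "(a, b) \<in> splits \<kappa> (min k (nnodes l)) (min k (nnodes r))"
        "card (R \<inter> ?L) \<le> a" "card (R \<inter> ?T) \<le> b"
        using splits_choose[OF h1 h2 h3 True] by blast
      have ab': "a \<le> min k (nnodes l)" "b \<le> min k (nnodes r)" using ab(1) by (auto simp: splits_def)
      have I1: "ereal (LB v (R \<inter> ?L)) \<le> Dtab Q pr Z c k t l (u @ [False]) a v"
        using Node.IH(1)[OF conjunct1[OF ch] subL(1)[OF Node.prems(2)] ab(2) ab'(1) vok_child[OF Node.prems(5)]] .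
      have I2: "ereal (LB v (R \<inter> ?T)) \<le> Dtab Q pr Z c k t r (u @ [True]) b v"
        using Node.IH(2)[OF conjunct2[OF ch] subL(2)[OF Node.prems(2)] ab(3) ab'(2) vok_child[OF Node.prems(5)]] .
      have "ereal (LB v R) = ereal (LB v (R \<inter> ?L)) + ereal (LB v (R \<inter> ?T))"
        using LB_minus[of R u v] Node.prems(2) False by auto
      also have "\<dots> \<le> Dtab Q pr Z c k t l (u @ [False]) a v + Dtab Q pr Z c k t r (u @ [True]) b v"
        using I1 I2 by (rule add_mono)
      also have "\<dots> \<le> splitmax \<kappa> (min k (nnodes l)) (min k (nnodes r))
              (\<lambda>a. Dtab Q pr Z c k t l (u @ [False]) a v)
              (\<lambda>b. Dtab Q pr Z c k t r (u @ [True]) b v)"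
        using splitmax_upper[OF ab(1)] .
      also have "\<dots> \<le> ?D" unfolding Dtab_Node by simp
      finally show ?thesis .
    next
      case False
      have "card R + 1 \<le> \<kappa>"
        using False cR cardL[OF Node.prems(2)] cardT[OF Node.prems(2)] Node.prems(4)
        by (auto simp: min_def split: if_splits)
      then have ci: "card (insert u R) \<le> \<kappa>" using finR[OF Node.prems(2)] by (simp add: card_insert_if)
      have ins: "insert u R \<subseteq> inner t \<inter> Tset t u" using Node.prems(2) u_inner[OF Node.prems(1)] by blast
      have "LB v R \<le> LB v (insert u R)"
        using LB_mono[of R u v] Node.prems(2,5) \<open>u \<notin> R\<close> by auto
      then have "ereal (LB v R) \<le> ereal (LB v (insert u R))" by simp
      also have "\<dots> \<le> ?D" using plus_case[OF ins _ ci] by simp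
      finally show ?thesis .
    qed
  qed
qed

end

theorem theorem1:
  fixes t :: "'x btree" and Q :: "'q set" and pr :: "'q \<Rightarrow> real"
    and Z :: "'q \<Rightarrow> 'x set" and c :: "pos \<Rightarrow> real" and k :: nat
  assumes "finite Q"
    and "\<forall>q\<in>Q. pr q \<ge> 0" and "(\<Sum>q\<in>Q. pr q) = 1"
    and "\<forall>x\<in>positions t. c x \<ge> 0"
    and "k > 0" and "k \<le> nnodes t"
  shows "(\<exists>S. construct Q pr Z c k t t [] k None S)
    \<and> (\<forall>S. construct Q pr Z c k t t [] k None S \<longrightarrow>
          S \<subseteq> inner t \<and> card S \<le> k
        \<and> (\<forall>R. R \<subseteq> inner t \<and> card R \<le> k \<longrightarrow> Ben Q pr t Z c R \<le> Ben Q pr t Z c S)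
        \<and> Dtab Q pr Z c k t t [] k None = ereal (Ben Q pr t Z c S))"
proof -
  interpret setting Q pr Z c k t using assms by unfold_locales auto
  have kb: "k \<le> min k (nnodes t)" using assms(6) by simp
  have st: "subtree t [] = t" by simp
  have vk: "vok None []" by (simp add: vok_def)
  have BL: "Ben Q pr t Z c R = LB None R" for R by (simp add: Ben_def LB_def)
  have Tr: "inner t \<inter> Tset t [] = inner t" by (auto simp: inner_def Tset_def)
  have ex: "\<exists>S. construct Q pr Z c k t t [] k None S" using construct_exists[OF kb] .
  have main: "S \<subseteq> inner t \<and> card S \<le> k
        \<and> (\<forall>R. R \<subseteq> inner t \<and> card R \<le> k \<longrightarrow> Ben Q pr t Z c R \<le> Ben Q pr t Z c S)
        \<and> Dtab Q pr Z c k t t [] k None = ereal (Ben Q pr t Z c S)"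
    if cS: "construct Q pr Z c k t t [] k None S" for S
  proof -
    have H: "S \<subseteq> inner t \<inter> Tset t [] \<and> card S \<le> k \<and> Dtab Q pr Z c k t t [] k None = ereal (LB None S)"
      using construct_sound[OF cS st vk] .
    have opt: "Ben Q pr t Z c R \<le> Ben Q pr t Z c S" if "R \<subseteq> inner t" "card R \<le> k" for R
    proof -
      have "ereal (LB None R) \<le> Dtab Q pr Z c k t t [] k None"
        using upper[OF st _ that(2) kb vk] that(1) Tr by simp
      then show ?thesis using H BL by simp
    qed
    show ?thesis using H opt BL Tr by auto
  qed
  show ?thesis using ex main by blast
qed

end
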